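(* Every tubal tensor $\mathcal A\in\mathbb{C}_p^{I_1\times\cdots\times I_N}$ can be written as $$\mathcal A=\mathcal S*_1\mathcal U_1*_2\mathcal U_2\cdots*_N\mathcal U_N,$$ where (1) each $\mathcal U_n\in\mathbb{C}_p^{I_n\times I_n}$ is unitary, and (2) $\mathcal S\in\mathbb{C}_p^{I_1\times\cdots\times I_N}$ is all-orthogonal: for all $1\le n\le N$ and all $1\le\alpha\neq\beta\le I_n$, $$\sum_{i_1,\dots,i_{n-1},i_{n+1},\dots,i_N}\mathcal S(i_1,\dots,i_{n-1},\alpha,i_{n+1},\dots,i_N)^H*\mathcal S(i_1,\dots,i_{n-1},\beta,i_{n+1},\dots,i_N)=\mathbf 0.$$ Moreover, if $L=cW$ with $c\in\mathbb{C}\setminus\{0\}$ and $W\in\mathbb{C}^{p\times p}$ a unitary matrix, then $\mathcal U_n$ and $\mathcal S$ can be chosen so that in addition the ordering property holds: for every $n$, $\|\mathcal S_{i_n=1}\|\ge\|\mathcal S_{i_n=2}\|\ge\cdots\ge\|\mathcal S_{i_n=I_n}\|$, where $\mathcal S_{i_n=\alpha}$ is the subtensor of $\mathcal S$ obtained by fixing the $n$-th index to $\alpha$ (equivalently the $\alpha$-th row of $\mathcal S_{(n)}$).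
   Context: Fix an integer $p\ge1$ and an invertible linear map $L:\mathbb{C}^p\to\mathbb{C}^p$. A tubal scalar is an element of $\mathbb{C}_p:=\mathbb{C}^p$; $\mathbf 0$ is the zero tubal scalar. The tensor-tensor product of tubal scalars is $\mathbf a*\mathbf b=L^{-1}(L(\mathbf a)\odot L(\mathbf b))$, where $\odot$ is the componentwise product. A tubal matrix $\mathcal A\in\mathbb{C}_p^{I\times J}$ is an $I\times J$ array of tubal scalars (identified with an array in $\mathbb{C}^{I\times J\times p}$); its $k$-th frontal slice $\mathcal A^{(k)}$ has entries $\mathcal A(i,j)^{(k)}$, and $L(\mathcal A)$ is obtained by applying $L$ to every entry. For $\mathcal A\in\mathbb{C}_p^{I\times J}$, $\mathcal B\in\mathbb{C}_p^{J\times K}$, $(\mathcal A*\mathcal B)(i,k)=\sum_j\mathcal A(i,j)*\mathcal B(j,k)$; equivalently $L(\mathcal A*\mathcal B)^{(k)}=L(\mathcal A)^{(k)}L(\mathcal B)^{(k)}$. The identity $\mathcal I_I$ has $L(\mathcal I_I)^{(k)}$ equal to the identity matrix for all $k$. The Hermitian transpose is defined by $L(\mathcal A^H)^{(k)}=(L(\mathcal A)^{(k)})^H$ (for a tubal scalar, viewed as a $1\times1$ tubal matrix). $\mathcal A\in\mathbb{C}_p^{I\times I}$ is unitary if $\mathcal A*\mathcal A^H=\mathcal A^H*\mathcal A=\mathcal I_I$. A tubal tensor $\mathcal A\in\mathbb{C}_p^{I_1\times\cdots\times I_N}$ is an $N$-way array of tubal scalars. Its mode-$n$ unfolding $\mathcal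 A_{(n)}\in\mathbb{C}_p^{I_n\times\prod_{m\neq n}I_m}$ has $\mathcal A_{(n)}(i_n,j)=\mathcal A(i_1,\dots,i_N)$, where $j=1+\sum_{k\neq n}(i_k-1)\prod_{m<k,\,m\neq n}I_m$. For $\mathcal U\in\mathbb{C}_p^{J\times I_n}$, the $n$-mode product is $(\mathcal A*_n\mathcal U)(i_1,\dots,i_{n-1},j,i_{n+1},\dots,i_N)=\sum_{i_n}\mathcal A(i_1,\dots,i_N)*\mathcal U(j,i_n)$; repeated mode products are evaluated left to right. $\|\cdot\|$ denotes the Frobenius norm (Euclidean norm of all complex entries of the underlying array). *)

theory Defs
  imports "HOL-Analysis.Analysis"
begin

text \<open>Tubal scalars are vectors in complex^'p (p = CARD('p)); the invertible linear
map L is given by its matrix L :: complex^'p^'p (acting by L *v a).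
Tubal matrices are functions nat => nat => tubal scalar (0-based indices, only the
entries with valid indices matter); tubal tensors of size dims!0 x ... x dims!(N-1)
are functions from index lists (0-based) to tubal scalars.\<close>

type_synonym 'p tubal = "complex ^ 'p"

definition tprod :: "complex^'p::finite^'p \<Rightarrow> 'p tubal \<Rightarrow> 'p tubal \<Rightarrow> 'p tubal" where
  "tprod L a b = matrix_inv L *v (\<chi> k. (L *v a)$k * (L *v b)$k)"

definition tconj :: "complex^'p::finite^'p \<Rightarrow> 'p tubal \<Rightarrow> 'p tubal" where
  "tconj L a = matrix_inv L *v (\<chi> k. cnj ((L *v a)$k))"

definition tmat_mult :: "complex^'p::finite^'p \<Rightarrow> nat \<Rightarrow> (nat \<Rightarrow> nat \<Rightarrow> 'p tubal)
    \<Rightarrow> (nat \<Rightarrow> nat \<Rightarrow> 'p tubal) \<Rightarrow> (nat \<Rightarrow> nat \<Rightarrow> 'p tubal)" where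
  "tmat_mult L J A B = (\<lambda>i k. \<Sum>j<J. tprod L (A i j) (B j k))"

definition tmat_herm :: "complex^'p::finite^'p \<Rightarrow> (nat \<Rightarrow> nat \<Rightarrow> 'p tubal) \<Rightarrow> (nat \<Rightarrow> nat \<Rightarrow> 'p tubal)" where
  "tmat_herm L A = (\<lambda>i j. tconj L (A j i))"

text \<open>Identity: L(I)^(k) is the identity for every k, i.e. diagonal entries are
L^{-1}(1,...,1) and off-diagonal entries are 0.\<close>
definition tmat_id :: "complex^'p::finite^'p \<Rightarrow> nat \<Rightarrow> nat \<Rightarrow> 'p tubal" where
  "tmat_id L = (\<lambda>i j. if i = j then matrix_inv L *v (\<chi> k. 1) else 0)"

definition tunitary :: "complex^'p::finite^'p \<Rightarrow> nat \<Rightarrow> (nat \<Rightarrow> nat \<Rightarrow> 'p tubal) \<Rightarrow> bool" where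
  "tunitary L n U \<longleftrightarrow>
     (\<forall>i<n. \<forall>j<n. tmat_mult L n U (tmat_herm L U) i j = tmat_id L i j
                 \<and> tmat_mult L n (tmat_herm L U) U i j = tmat_id L i j)"

definition idx_set :: "nat list \<Rightarrow> nat list set" where
  "idx_set dims = {is. length is = length dims \<and> (\<forall>k<length dims. is!k < dims!k)}"

definition mode_prod :: "complex^'p::finite^'p \<Rightarrow> nat list \<Rightarrow> (nat list \<Rightarrow> 'p tubal) \<Rightarrow> nat
    \<Rightarrow> (nat \<Rightarrow> nat \<Rightarrow> 'p tubal) \<Rightarrow> (nat list \<Rightarrow> 'p tubal)" where
  "mode_prod L dims A n U = (\<lambda>is. \<Sum>i<dims!n. tprod L (A (is[n := i])) (U (is!n) i))"

definition multi_mode_prod :: "complex^'p::finite^'p \<Rightarrow> nat list \<Rightarrow> (nat list \<Rightarrow> 'p tubal)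
    \<Rightarrow> (nat \<Rightarrow> nat \<Rightarrow> nat \<Rightarrow> 'p tubal) \<Rightarrow> (nat list \<Rightarrow> 'p tubal)" where
  "multi_mode_prod L dims S Us = foldl (\<lambda>T n. mode_prod L dims T n (Us n)) S [0..<length dims]"

definition all_orthogonal :: "complex^'p::finite^'p \<Rightarrow> nat list \<Rightarrow> (nat list \<Rightarrow> 'p tubal) \<Rightarrow> bool" where
  "all_orthogonal L dims S \<longleftrightarrow>
     (\<forall>n<length dims. \<forall>\<alpha><dims!n. \<forall>\<beta><dims!n. \<alpha> \<noteq> \<beta> \<longrightarrow>
        (\<Sum>is\<in>{is\<in>idx_set dims. is!n = \<alpha>}. tprod L (tconj L (S is)) (S (is[n := \<beta>]))) = 0)"

definition slice_norm :: "nat list \<Rightarrow> (nat list \<Rightarrow> ('p::finite) tubal) \<Rightarrow> nat \<Rightarrow> nat \<Rightarrow> real" where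
  "slice_norm dims S n \<alpha> = sqrt (\<Sum>is\<in>{is\<in>idx_set dims. is!n = \<alpha>}. \<Sum>k\<in>UNIV. (cmod ((S is)$k))\<^sup>2)"

definition ordered_slices :: "nat list \<Rightarrow> (nat list \<Rightarrow> ('p::finite) tubal) \<Rightarrow> bool" where
  "ordered_slices dims S \<longleftrightarrow>
     (\<forall>n<length dims. \<forall>\<alpha> \<beta>. \<alpha> \<le> \<beta> \<and> \<beta> < dims!n \<longrightarrow> slice_norm dims S n \<beta> \<le> slice_norm dims S n \<alpha>)"

definition cmat_unitary :: "complex^'p::finite^'p \<Rightarrow> bool" where
  "cmat_unitary W \<longleftrightarrow> (let Wh = (\<chi> i j. cnj (W$j$i)) in W ** Wh = mat 1 \<and> Wh ** W = mat 1)"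

end

theory Submission
  imports Defs Jordan_Normal_Form.Char_Poly
begin

lemma eig_fun:
  fixes G :: "nat \<Rightarrow> nat \<Rightarrow> complex"
  assumes n: "n > 0"
  shows "\<exists>E. finite E \<and> E \<noteq> {} \<and> (\<forall>e. e \<in> E \<longleftrightarrow>
     (\<exists>x. (\<exists>i<n. x i \<noteq> 0) \<and> (\<forall>i<n. (\<Sum>j<n. G i j * x j) = e * x i)))"
proof -
  define A where "A = Matrix.mat n n (\<lambda>(i,j). G i j)"
  have A: "A \<in> carrier_mat n n" unfolding A_def by simp
  obtain as where cp: "char_poly A = (\<Prod> a \<leftarrow> as. [:- a, 1:])" and len: "length as = n"
    using char_poly_factorized[OF A] by blast
  have ev: "eigenvalue A e \<longleftrightarrow> e \<in> set as" for e
    unfolding eigenvalue_root_char_poly[OF A] cp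
    by (simp add: poly_prod_list prod_list_zero_iff image_iff)
  have ev2: "eigenvalue A e \<longleftrightarrow> (\<exists>x. (\<exists>i<n. x i \<noteq> 0) \<and> (\<forall>i<n. (\<Sum>j<n. G i j * x j) = e * x i))" for e
  proof
    assume "eigenvalue A e"
    then obtain v where v: "v \<in> carrier_vec n" "v \<noteq> 0\<^sub>v n" "A *\<^sub>v v = e \<cdot>\<^sub>v v"
      unfolding eigenvalue_def eigenvector_def using A by auto
    have "\<exists>i<n. v $ i \<noteq> 0"
    proof (rule ccontr)
      assume "\<not> ?thesis"
      hence "v = 0\<^sub>v n" using v(1) by (intro eq_vecI) auto
      thus False using v(2) by simp
    qed
    moreover have "(\<Sum>j<n. G i j * v $ j) = e * v $ i" if "i < n" for i
    proof -
      have "(A *\<^sub>v v) $ i = e * v $ i" using v(3) v(1) that by simp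
      moreover have "(A *\<^sub>v v) $ i = (\<Sum>j<n. G i j * v $ j)"
        using that v(1) unfolding A_def
        by (simp add: scalar_prod_def row_def atLeast0LessThan)
      ultimately show ?thesis by simp
    qed
    ultimately show "\<exists>x. (\<exists>i<n. x i \<noteq> 0) \<and> (\<forall>i<n. (\<Sum>j<n. G i j * x j) = e * x i)" by blast
  next
    assume "\<exists>x. (\<exists>i<n. x i \<noteq> 0) \<and> (\<forall>i<n. (\<Sum>j<n. G i j * x j) = e * x i)"
    then obtain x where x: "\<exists>i<n. x i \<noteq> 0" "\<forall>i<n. (\<Sum>j<n. G i j * x j) = e * x i" by blast
    define v where "v = vec n x"
    have "v \<noteq> 0\<^sub>v n" using x(1) unfolding v_def by (auto simp: vec_eq_iff)
    moreover have "A *\<^sub>v v = e \<cdot>\<^sub>v v"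
      using x(2) unfolding A_def v_def
      by (intro eq_vecI) (auto simp: scalar_prod_def row_def atLeast0LessThan)
    moreover have "v \<in> carrier_vec n" unfolding v_def by simp
    ultimately show "eigenvalue A e" unfolding eigenvalue_def eigenvector_def using A
      by auto
  qed
  show ?thesis
    apply (rule exI[of _ "set as"])
    using ev ev2 len n by auto
qed

no_notation vec_index (infixl "$" 100)

definition mmul :: "nat \<Rightarrow> (nat \<Rightarrow> nat \<Rightarrow> complex) \<Rightarrow> (nat \<Rightarrow> nat \<Rightarrow> complex) \<Rightarrow> nat \<Rightarrow> nat \<Rightarrow> complex" where
  "mmul n A B = (\<lambda>i j. \<Sum>k<n. A i k * B k j)"

definition adj :: "(nat \<Rightarrow> nat \<Rightarrow> complex) \<Rightarrow> nat \<Rightarrow> nat \<Rightarrow> complex" where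
  "adj A = (\<lambda>i j. cnj (A j i))"

definition idm :: "nat \<Rightarrow> nat \<Rightarrow> complex" where
  "idm = (\<lambda>i j. if i = j then 1 else 0)"

definition unit :: "nat \<Rightarrow> (nat \<Rightarrow> nat \<Rightarrow> complex) \<Rightarrow> bool" where
  "unit n P \<longleftrightarrow> (\<forall>i<n. \<forall>j<n. mmul n P (adj P) i j = idm i j \<and> mmul n (adj P) P i j = idm i j)"

definition herm :: "nat \<Rightarrow> (nat \<Rightarrow> nat \<Rightarrow> complex) \<Rightarrow> bool" where
  "herm n G \<longleftrightarrow> (\<forall>i<n. \<forall>j<n. G j i = cnj (G i j))"

lemma mmul_assoc: "mmul n (mmul n A B) C = mmul n A (mmul n B C)"
  unfolding mmul_def
  by (auto simp: fun_eq_iff sum_distrib_left sum_distrib_right mult.assoc intro: sum.swap)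

lemma adj_mmul: "adj (mmul n A B) = mmul n (adj B) (adj A)"
  unfolding mmul_def adj_def by (auto simp: fun_eq_iff mult.commute)

lemma adj_adj[simp]: "adj (adj A) = A"
  unfolding adj_def by auto

lemma mmul_idm_left: "i < n \<Longrightarrow> mmul n idm A i j = A i j"
  unfolding mmul_def idm_def
  by (subst sum.cong[OF refl, of _ _ "\<lambda>k. if i = k then A k j else 0"]) auto

lemma mmul_idm_right: "j < n \<Longrightarrow> mmul n A idm i j = A i j"
  unfolding mmul_def idm_def
  by (subst sum.cong[OF refl, of _ _ "\<lambda>k. if k = j then A i k else 0"]) auto

lemma mmul_cong_right: "(\<And>k. k < n \<Longrightarrow> X k j = Y k j) \<Longrightarrow> mmul n A X i j = mmul n A Y i j"
  unfolding mmul_def by (auto intro: sum.cong)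

lemma mmul_cong_left: "(\<And>k. k < n \<Longrightarrow> X i k = Y i k) \<Longrightarrow> mmul n X A i j = mmul n Y A i j"
  unfolding mmul_def by (auto intro: sum.cong)

lemma unit_mmul:
  assumes A: "unit n A" and B: "unit n B"
  shows "unit n (mmul n A B)"
  unfolding unit_def
proof (intro allI impI conjI)
  fix i j assume ij: "i < n" "j < n"
  have "mmul n (mmul n A B) (adj (mmul n A B)) i j = mmul n A (mmul n (mmul n B (adj B)) (adj A)) i j"
    by (simp add: adj_mmul mmul_assoc)
  also have "\<dots> = mmul n A (mmul n idm (adj A)) i j"
    apply (rule mmul_cong_right)
    apply (rule mmul_cong_left)
    using B unfolding unit_def by auto
  also have "\<dots> = mmul n A (adj A) i j"
    by (rule mmul_cong_right) (simp add: mmul_idm_left)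
  also have "\<dots> = idm i j" using A ij unfolding unit_def by auto
  finally show "mmul n (mmul n A B) (adj (mmul n A B)) i j = idm i j" .
  have "mmul n (adj (mmul n A B)) (mmul n A B) i j = mmul n (adj B) (mmul n (mmul n (adj A) A) B) i j"
    by (simp add: adj_mmul mmul_assoc)
  also have "\<dots> = mmul n (adj B) (mmul n idm B) i j"
    apply (rule mmul_cong_right)
    apply (rule mmul_cong_left)
    using A unfolding unit_def by auto
  also have "\<dots> = mmul n (adj B) B i j"
    by (rule mmul_cong_right) (simp add: mmul_idm_left)
  also have "\<dots> = idm i j" using B ij unfolding unit_def by auto
  finally show "mmul n (adj (mmul n A B)) (mmul n A B) i j = idm i j" .
qed


lemma sum_delta_left: "(i::nat) < n \<Longrightarrow> (\<Sum>k<n. (if i = k then 1 else 0) * f k) = (f i :: complex)"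
  by (subst sum.cong[OF refl, of _ _ "\<lambda>k. if i = k then f k else 0"]) (auto simp: sum.delta sum.delta')

lemma sum_delta_right: "(i::nat) < n \<Longrightarrow> (\<Sum>k<n. f k * (if k = i then 1 else 0)) = (f i :: complex)"
  by (subst sum.cong[OF refl, of _ _ "\<lambda>k. if k = i then f k else 0"]) (auto simp: sum.delta sum.delta')

lemma cnj_mult_self: "cnj z * z = complex_of_real ((cmod z)\<^sup>2)"
  by (metis complex_norm_square mult.commute)

lemma if10_mult[simp]: "(if P then 1 else 0) * (y::complex) = (if P then y else 0)"
  by simp
lemma mult_if10[simp]: "(y::complex) * (if P then 1 else 0) = (if P then y else 0)"
  by simp

lemma sum_cnj_self_zero:
  fixes v :: "nat \<Rightarrow> complex"
  assumes "(\<Sum>k<n. cnj (v k) * v k) = 0" "i < n"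
  shows "v i = 0"
proof -
  have "complex_of_real (\<Sum>k<n. (cmod (v k))\<^sup>2) = 0"
    using assms(1) unfolding cnj_mult_self of_real_sum .
  hence "(\<Sum>k<n. (cmod (v k))\<^sup>2) = 0" by (simp only: of_real_eq_0_iff)
  hence "\<forall>k\<in>{..<n}. (cmod (v k))\<^sup>2 = 0"
    by (subst sum_nonneg_eq_0_iff[symmetric]) auto
  thus ?thesis using assms(2) by auto
qed

lemma adj_idm[simp]: "adj idm = idm"
  by (auto simp: adj_def idm_def fun_eq_iff)

lemma cnj_idm[simp]: "cnj (idm i j) = idm i j"
  by (auto simp: idm_def)

lemma unit_idm: "unit n idm"
  unfolding unit_def by (auto simp: mmul_idm_left)

lemma householder:
  fixes x :: "nat \<Rightarrow> complex" and r :: real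
  assumes norm: "(\<Sum>k<m. cnj (x k) * x k) = 1" and m: "0 < m" and x0: "x 0 = of_real r"
  shows "\<exists>W. unit m W \<and> (\<forall>i<m. W i 0 = x i)"
proof -
  define v where "v i = x i - idm i 0" for i
  define s where "s = (\<Sum>k<m. cnj (v k) * v k)"
  show ?thesis
  proof (cases "s = 0")
    case True
    have "v i = 0" if "i < m" for i using sum_cnj_self_zero[OF True[unfolded s_def] that] .
    hence "x i = idm i 0" if "i < m" for i using that unfolding v_def by auto
    thus ?thesis using unit_idm by metis
  next
    case False
    have s: "s = 2 - 2 * of_real r"
    proof -
      have "s = (\<Sum>k<m. cnj (x k) * x k) - (\<Sum>k<m. idm k 0 * x k)
               - (\<Sum>k<m. cnj (x k) * idm k 0)
               + (\<Sum>k<m. idm k 0 * idm k 0)"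
        unfolding s_def v_def
        by (simp add: algebra_simps sum.distrib sum_subtractf)
      also have "\<dots> = 2 - 2 * of_real r"
        using m x0 norm by (simp add: idm_def)
      finally show ?thesis .
    qed
    have r1: "r \<noteq> 1" using False s by auto
    define c where "c = 2 / s"
    have cs: "c * s = 2" using False unfolding c_def by simp
    have cc: "cnj c = c" unfolding c_def s by simp
    define W where "W i j = idm i j - c * v i * cnj (v j)" for i j
    have v0: "v 0 = of_real r - 1" unfolding v_def idm_def using x0 by simp
    have W0: "W i 0 = x i" for i
    proof -
      have "c * cnj (v 0) = -1"
        unfolding v0 c_def s using r1
        by (simp add: field_simps)
      hence "W i 0 = idm i 0 + v i" unfolding W_def
        by (metis (no_types, lifting) diff_minus_eq_add mult.commute mult.left_commute mult_minus1_right)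
      thus ?thesis unfolding v_def by simp
    qed
    have WH: "adj W = W" unfolding adj_def W_def
      by (auto simp: fun_eq_iff cc idm_def mult.commute mult.left_commute)
    have last: "(\<Sum>k<m. (c * v i * cnj (v k)) * (c * v k * cnj (v j))) = c * c * v i * cnj (v j) * s" for i j
      unfolding s_def by (simp add: sum_distrib_left mult.commute mult.left_commute)
    have sq: "mmul m W W i j = idm i j" if ij: "i < m" "j < m" for i j
    proof -
      have "mmul m W W i j = (\<Sum>k<m. idm i k * idm k j) - (\<Sum>k<m. idm i k * (c * v k * cnj (v j)))
         - (\<Sum>k<m. (c * v i * cnj (v k)) * idm k j) + (\<Sum>k<m. (c * v i * cnj (v k)) * (c * v k * cnj (v j)))"
        unfolding mmul_def W_def by (simp add: algebra_simps sum.distrib sum_subtractf)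
      also have "\<dots> = idm i j - c * v i * cnj (v j) - c * v i * cnj (v j) + c * c * v i * cnj (v j) * s"
        unfolding last using ij by (simp add: idm_def sum_delta_left sum_delta_right)
      also have "\<dots> = idm i j"
      proof -
        have "c * c * v i * cnj (v j) * s = (c * s) * (c * v i * cnj (v j))" by (simp add: mult_ac)
        thus ?thesis unfolding cs by simp
      qed
      finally show ?thesis .
    qed
    have "unit m W" unfolding unit_def WH using sq by auto
    thus ?thesis using W0 by blast
  qed
qed


lemma herm_adj_eq: "herm n G \<Longrightarrow> i < n \<Longrightarrow> j < n \<Longrightarrow> adj G i j = G i j"
  unfolding herm_def adj_def by (metis complex_cnj_cnj)

lemma eig_real:
  fixes G :: "nat \<Rightarrow> nat \<Rightarrow> complex"
  assumes h: "herm m G" and x: "\<exists>i<m. x i \<noteq> 0" and ev: "\<forall>i<m. (\<Sum>j<m. G i j * x j) = e * x i"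
  shows "cnj e = e"
proof -
  define q where "q = (\<Sum>i<m. \<Sum>j<m. cnj (x i) * G i j * x j)"
  define t where "t = (\<Sum>i<m. cnj (x i) * x i)"
  have q1: "q = e * t"
  proof -
    have "q = (\<Sum>i<m. cnj (x i) * (\<Sum>j<m. G i j * x j))"
      unfolding q_def by (simp add: sum_distrib_left mult.assoc)
    also have "\<dots> = (\<Sum>i<m. cnj (x i) * (e * x i))" using ev by simp
    also have "\<dots> = e * t" unfolding t_def by (simp add: sum_distrib_left mult_ac)
    finally show ?thesis .
  qed
  have q2: "cnj q = q"
  proof -
    have "cnj q = (\<Sum>i<m. \<Sum>j<m. x i * cnj (G i j) * cnj (x j))" unfolding q_def by simp
    also have "\<dots> = (\<Sum>i<m. \<Sum>j<m. x i * G j i * cnj (x j))"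
      using h unfolding herm_def by (intro sum.cong refl) (metis lessThan_iff)
    also have "\<dots> = q" unfolding q_def
      by (subst sum.swap) (simp add: mult_ac)
    finally show ?thesis .
  qed
  have tr: "t = of_real (\<Sum>i<m. (cmod (x i))\<^sup>2)" unfolding t_def cnj_mult_self of_real_sum ..
  have t0: "t \<noteq> 0"
  proof
    assume "t = 0"
    then obtain i where "i < m" "x i \<noteq> 0" using x by blast
    thus False using sum_cnj_self_zero[where n=m and v=x and i=i] \<open>t = 0\<close> unfolding t_def by blast
  qed
  have ct: "cnj t = t" using tr by simp
  have "cnj (e * t) = e * t" using q1 q2 by simp
  hence "cnj e * t = e * t" using ct by simp
  thus ?thesis using t0 by simp
qed

lemma herm_conj:
  assumes "herm m G"
  shows "herm m (mmul m (mmul m (adj W) G) W)"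
  unfolding herm_def
proof (intro allI impI)
  fix i j assume ij: "i < m" "j < m"
  have "cnj (mmul m (mmul m (adj W) G) W i j) = adj (mmul m (mmul m (adj W) G) W) j i"
    unfolding adj_def by simp
  also have "\<dots> = mmul m (mmul m (adj W) (adj G)) W j i"
    by (simp add: adj_mmul mmul_assoc)
  also have "\<dots> = mmul m (mmul m (adj W) G) W j i"
    apply (rule mmul_cong_left)
    apply (rule mmul_cong_right)
    using herm_adj_eq[OF assms] by auto
  finally show "mmul m (mmul m (adj W) G) W j i = cnj (mmul m (mmul m (adj W) G) W i j)" by simp
qed

definition blk :: "(nat \<Rightarrow> nat \<Rightarrow> complex) \<Rightarrow> nat \<Rightarrow> nat \<Rightarrow> complex" where
  "blk P = (\<lambda>i j. if i = 0 \<or> j = 0 then idm i j else P (i - 1) (j - 1))"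

lemma blk_simps[simp]: "blk P 0 j = idm 0 j" "blk P i 0 = idm i 0" "blk P (Suc i) (Suc j) = P i j"
  unfolding blk_def by auto

lemma idm_simps[simp]: "idm 0 0 = 1" "idm (Suc i) 0 = 0" "idm 0 (Suc j) = 0" "idm (Suc i) (Suc j) = idm i j"
  unfolding idm_def by auto

lemma mmul_Suc: "mmul (Suc n) A B i j = A i 0 * B 0 j + (\<Sum>k<n. A i (Suc k) * B (Suc k) j)"
  unfolding mmul_def by (rule sum.lessThan_Suc_shift)

lemma unit_blk:
  assumes "unit n P"
  shows "unit (Suc n) (blk P)"
  unfolding unit_def
proof (intro allI impI conjI)
  fix i j assume ij: "i < Suc n" "j < Suc n"
  show "mmul (Suc n) (blk P) (adj (blk P)) i j = idm i j"
    using ij assms unfolding mmul_Suc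
    by (cases i; cases j) (auto simp: adj_def unit_def mmul_def)
  show "mmul (Suc n) (adj (blk P)) (blk P) i j = idm i j"
    using ij assms unfolding mmul_Suc
    by (cases i; cases j) (auto simp: adj_def unit_def mmul_def)
qed


lemma spectral_aux:
  "herm n G \<Longrightarrow> \<exists>P d. unit n P \<and> (\<forall>i<n. \<forall>j<n. mmul n G P i j = P i j * of_real (d j))
     \<and> (\<forall>i j. i \<le> j \<longrightarrow> j < n \<longrightarrow> d j \<le> (d i :: real))"
proof (induction n arbitrary: G)
  case 0
  show ?case using unit_idm by (rule_tac x=idm in exI) auto
next
  case (Suc n)
  define m where "m = Suc n"
  have hG: "herm m G" using Suc.prems unfolding m_def .
  obtain E where E: "finite E" "E \<noteq> {}"
    and Eiff: "\<And>e. e \<in> E \<longleftrightarrow> (\<exists>x. (\<exists>i<m. x i \<noteq> 0) \<and> (\<forall>i<m. (\<Sum>j<m. G i j * x j) = e * x i))"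
    using eig_fun[of m G] unfolding m_def by auto
  have Ereal: "e \<in> E \<Longrightarrow> cnj e = e" for e
    using eig_real[OF hG] Eiff by blast
  define lam where "lam = Max (Re ` E)"
  have lam_ge: "e \<in> E \<Longrightarrow> Re e \<le> lam" for e unfolding lam_def using E by auto
  have "lam \<in> Re ` E" unfolding lam_def using E by (intro Max_in) auto
  then obtain e0 where e0: "e0 \<in> E" "Re e0 = lam" by force
  have e0r: "e0 = of_real lam"
    using Ereal[OF e0(1)] e0(2) by (metis Reals_cnj_iff complex_is_Real_iff of_real_Re)
  obtain x where x: "\<exists>i<m. x i \<noteq> 0" "\<forall>i<m. (\<Sum>j<m. G i j * x j) = of_real lam * x i"
    using Eiff[of e0] e0(1) e0r by auto
  define tr where "tr = (\<Sum>i<m. (cmod (x i))\<^sup>2)"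
  have tr_pos: "tr > 0"
  proof -
    obtain i where i: "i < m" "x i \<noteq> 0" using x(1) by blast
    have "(cmod (x i))\<^sup>2 \<le> tr" unfolding tr_def
      using i by (intro member_le_sum) auto
    moreover have "(cmod (x i))\<^sup>2 > 0" using i by simp
    ultimately show ?thesis by linarith
  qed
  define u where "u i = x i / of_real (sqrt tr)" for i
  have unorm: "(\<Sum>i<m. cnj (u i) * u i) = 1"
  proof -
    have "(\<Sum>i<m. cnj (u i) * u i) = (\<Sum>i<m. cnj (x i) * x i) / of_real tr"
      unfolding u_def using tr_pos
      by (simp add: sum_divide_distrib power2_eq_square flip: of_real_mult)
    also have "(\<Sum>i<m. cnj (x i) * x i) = of_real tr"
      unfolding tr_def cnj_mult_self of_real_sum ..
    finally show ?thesis using tr_pos by simp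
  qed
  have uev: "(\<Sum>j<m. G i j * u j) = of_real lam * u i" if "i < m" for i
  proof -
    have "(\<Sum>j<m. G i j * u j) = (\<Sum>j<m. G i j * x j) / of_real (sqrt tr)"
      unfolding u_def by (simp add: sum_divide_distrib)
    thus ?thesis using x(2) that unfolding u_def by simp
  qed
  define om where "om = (if u 0 = 0 then 1 else of_real (cmod (u 0)) / u 0)"
  define y where "y i = om * u i" for i
  have om1: "cnj om * om = 1"
    unfolding om_def
    by (auto simp: field_simps) (metis cnj_mult_self mult.commute of_real_mult power2_eq_square)
  have ynorm: "(\<Sum>i<m. cnj (y i) * y i) = 1"
  proof -
    have "(\<Sum>i<m. cnj (y i) * y i) = (\<Sum>i<m. (cnj om * om) * (cnj (u i) * u i))"
      unfolding y_def by (simp add: mult_ac)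
    thus ?thesis using om1 unorm by simp
  qed
  have y0: "y 0 = of_real (cmod (u 0))"
    unfolding y_def om_def by auto
  have yev: "(\<Sum>j<m. G i j * y j) = of_real lam * y i" if "i < m" for i
  proof -
    have "(\<Sum>j<m. G i j * y j) = om * (\<Sum>j<m. G i j * u j)"
      unfolding y_def by (simp add: sum_distrib_left mult_ac)
    thus ?thesis using uev[OF that] unfolding y_def by (simp add: mult_ac)
  qed
  obtain W where W: "unit m W" "\<forall>i<m. W i 0 = y i"
    using householder[OF ynorm _ y0] unfolding m_def by auto
  have mmul_scale: "mmul m A (\<lambda>k j. c * X k j) i j = c * mmul m A X i j" for A X c i j
    by (simp add: mmul_def sum_distrib_left mult_ac)
  have GW0: "mmul m G W k 0 = of_real lam * W k 0" if "k < m" for k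
  proof -
    have "mmul m G W k 0 = (\<Sum>j<m. G k j * y j)" unfolding mmul_def using W(2) by simp
    thus ?thesis using yev[OF that] W(2) that by simp
  qed
  define B where "B = mmul m (mmul m (adj W) G) W"
  have B0: "B i 0 = of_real lam * idm i 0" if "i < m" for i
  proof -
    have "B i 0 = mmul m (adj W) (mmul m G W) i 0" unfolding B_def by (simp add: mmul_assoc)
    also have "\<dots> = mmul m (adj W) (\<lambda>k j. of_real lam * W k j) i 0"
      by (rule mmul_cong_right) (simp add: GW0)
    also have "\<dots> = of_real lam * mmul m (adj W) W i 0" by (rule mmul_scale)
    also have "\<dots> = of_real lam * idm i 0" using W(1) that unfolding unit_def m_def by auto
    finally show ?thesis .
  qed
  have hB: "herm m B" unfolding B_def by (rule herm_conj[OF hG])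
  have B0': "B 0 j = of_real lam * idm 0 j" if "j < m" for j
  proof -
    have "B 0 j = cnj (B j 0)" using hB[unfolded herm_def, rule_format, of j 0] that unfolding m_def by simp
    thus ?thesis using B0[OF that] by (simp add: idm_def)
  qed
  define B' where "B' i j = B (Suc i) (Suc j)" for i j
  have hB': "herm n B'" unfolding herm_def B'_def
  proof (intro allI impI)
    fix i j assume "i < n" "j < n"
    thus "B (Suc j) (Suc i) = cnj (B (Suc i) (Suc j))"
      using hB[unfolded herm_def, rule_format, of "Suc i" "Suc j"] unfolding m_def by simp
  qed
  obtain P' d' where P': "unit n P'" "\<forall>i<n. \<forall>j<n. mmul n B' P' i j = P' i j * of_real (d' j)"
    "\<forall>i j. i \<le> j \<longrightarrow> j < n \<longrightarrow> d' j \<le> (d' i :: real)"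
    using Suc.IH[OF hB'] by (elim exE conjE) (rule that)
  define Q where "Q = blk P'"
  have uQ: "unit m Q" unfolding Q_def m_def by (rule unit_blk[OF P'(1)])
  define d where "d i = (if i = 0 then lam else d' (i - 1))" for i
  have BQ: "mmul m B Q i j = Q i j * of_real (d j)" if ij: "i < m" "j < m" for i j
  proof (cases j)
    case 0
    have "mmul m B Q i j = B i 0" unfolding m_def mmul_Suc Q_def 0 by simp
    thus ?thesis using B0[OF ij(1)] 0 unfolding Q_def d_def by (simp add: mult.commute)
  next
    case (Suc j')
    have j': "j' < n" using ij Suc unfolding m_def by simp
    have e: "mmul m B Q i j = (\<Sum>k<n. B i (Suc k) * P' k j')" unfolding m_def mmul_Suc Q_def Suc by simp
    show ?thesis
    proof (cases i)
      case 0
      have "B i (Suc k) = 0" if "k < n" for k using B0'[of "Suc k"] that 0 unfolding m_def by simp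
      thus ?thesis unfolding e using 0 Suc unfolding Q_def by simp
    next
      case (Suc i')
      have i': "i' < n" using ij Suc unfolding m_def by simp
      have "mmul n B' P' i' j' = (\<Sum>k<n. B i (Suc k) * P' k j')" unfolding mmul_def B'_def Suc by simp
      hence "mmul m B Q i j = mmul n B' P' i' j'" using e by simp
      thus ?thesis using P'(2) i' j' Suc \<open>j = Suc j'\<close> unfolding Q_def d_def by simp
    qed
  qed
  define P where "P = mmul m W Q"
  have uP: "unit m P" unfolding P_def by (rule unit_mmul[OF W(1) uQ])
  have WB: "mmul m W B i k = mmul m G W i k" if "i < m" for i k
  proof -
    have "mmul m W B i k = mmul m (mmul m W (adj W)) (mmul m G W) i k"
      unfolding B_def by (simp add: mmul_assoc)
    also have "\<dots> = mmul m idm (mmul m G W) i k"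
      by (rule mmul_cong_left) (use W(1) that in \<open>auto simp: unit_def\<close>)
    also have "\<dots> = mmul m G W i k" using that by (rule mmul_idm_left)
    finally show ?thesis .
  qed
  have GP: "mmul m G P i j = P i j * of_real (d j)" if ij: "i < m" "j < m" for i j
  proof -
    have "mmul m G P i j = mmul m (mmul m G W) Q i j" unfolding P_def by (simp add: mmul_assoc)
    also have "\<dots> = mmul m (mmul m W B) Q i j"
      by (rule mmul_cong_left) (simp add: WB ij)
    also have "\<dots> = mmul m W (mmul m B Q) i j" by (simp add: mmul_assoc)
    also have "\<dots> = mmul m W (\<lambda>k j. of_real (d j) * Q k j) i j"
      by (rule mmul_cong_right) (simp add: BQ ij mult.commute)
    also have "\<dots> = P i j * of_real (d j)"
      unfolding P_def mmul_def by (simp add: sum_distrib_left sum_distrib_right mult_ac)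
    finally show ?thesis .
  qed
  have dle: "d j \<le> lam" if j: "j < m" for j
  proof -
    have "\<exists>k<m. P k j \<noteq> 0"
    proof (rule ccontr)
      assume "\<not> ?thesis"
      hence "mmul m (adj P) P j j = 0" unfolding mmul_def by (simp add: adj_def)
      moreover have "mmul m (adj P) P j j = 1" using uP j unfolding unit_def by (simp add: idm_def)
      ultimately show False by simp
    qed
    moreover have "\<forall>k<m. (\<Sum>l<m. G k l * P l j) = of_real (d j) * P k j"
      using GP j unfolding mmul_def by (simp add: mult.commute)
    ultimately have "of_real (d j) \<in> E" unfolding Eiff[of "of_real (d j)"] by (intro exI[of _ "\<lambda>k. P k j"]) simp
    from lam_ge[OF this] show ?thesis by simp
  qed
  have sorted: "d j \<le> d i" if ij: "i \<le> j" "j < Suc n" for i j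
  proof (cases i)
    case 0
    thus ?thesis using dle[of j] that unfolding m_def d_def by simp
  next
    case (Suc i')
    then obtain j' where "j = Suc j'" using ij by (cases j) simp_all
    thus ?thesis using P'(3) ij Suc unfolding d_def by auto
  qed
  have GP': "\<forall>i<Suc n. \<forall>j<Suc n. mmul (Suc n) G P i j = P i j * of_real (d j)"
    using GP unfolding m_def by blast
  have sorted': "\<forall>i j. i \<le> j \<longrightarrow> j < Suc n \<longrightarrow> d j \<le> d i" using sorted by blast
  show ?case using uP GP' sorted' unfolding m_def by blast
qed


lemma idx_set_Nil: "idx_set [] = {[]}"
  unfolding idx_set_def by auto

lemma idx_set_Cons: "idx_set (d # ds) = (\<lambda>(j, js). j # js) ` ({..<d} \<times> idx_set ds)"
proof (intro equalityI subsetI)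
  fix xs assume "xs \<in> idx_set (d # ds)"
  hence l: "length xs = Suc (length ds)" and b: "\<forall>k<Suc (length ds). xs ! k < (d # ds) ! k"
    unfolding idx_set_def by auto
  then obtain j js where isj: "xs = j # js" by (cases xs) auto
  have "j < d" using b isj by auto
  moreover have "js \<in> idx_set ds" unfolding idx_set_def
  proof (intro CollectI conjI allI impI)
    show "length js = length ds" using l isj by simp
    fix k assume "k < length ds"
    thus "js ! k < ds ! k" using b isj by (metis Suc_less_eq nth_Cons_Suc)
  qed
  ultimately show "xs \<in> (\<lambda>(j, js). j # js) ` ({..<d} \<times> idx_set ds)" using isj by force
next
  fix xs assume "xs \<in> (\<lambda>(j, js). j # js) ` ({..<d} \<times> idx_set ds)"
  then obtain j js where "xs = j # js" "j < d" "js \<in> idx_set ds" by auto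
  thus "xs \<in> idx_set (d # ds)" unfolding idx_set_def
    by (auto simp: less_Suc_eq_0_disj)
qed

lemma finite_idx_set: "finite (idx_set dims)"
  by (induction dims) (auto simp: idx_set_Nil idx_set_Cons)

lemma idx_set_length: "xs \<in> idx_set dims \<Longrightarrow> length xs = length dims"
  unfolding idx_set_def by auto

lemma idx_set_nth: "xs \<in> idx_set dims \<Longrightarrow> k < length dims \<Longrightarrow> xs ! k < dims ! k"
  unfolding idx_set_def by auto

lemma idx_set_upd: "xs \<in> idx_set dims \<Longrightarrow> i < dims ! n \<Longrightarrow> xs[n := i] \<in> idx_set dims"
  unfolding idx_set_def
  apply auto
  subgoal for k by (cases "k = n") auto
  done

lemma sum_prod_idx:
  fixes f :: "nat \<Rightarrow> nat \<Rightarrow> complex"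
  shows "(\<Sum>js\<in>idx_set dims. \<Prod>m<length dims. f m (js ! m)) = (\<Prod>m<length dims. \<Sum>j<dims ! m. f m j)"
proof (induction dims arbitrary: f)
  case Nil
  show ?case by (simp add: idx_set_Nil)
next
  case (Cons d ds)
  have inj: "inj_on (\<lambda>(j, js). j # js) ({..<d} \<times> idx_set ds)"
    by (auto simp: inj_on_def)
  have "(\<Sum>js\<in>idx_set (d # ds). \<Prod>m<length (d # ds). f m (js ! m))
      = (\<Sum>x\<in>{..<d} \<times> idx_set ds. \<Prod>m<Suc (length ds). f m ((fst x # snd x) ! m))"
    unfolding idx_set_Cons sum.reindex[OF inj] by (simp add: case_prod_unfold o_def del: prod.lessThan_Suc)
  also have "\<dots> = (\<Sum>x\<in>{..<d} \<times> idx_set ds. f 0 (fst x) * (\<Prod>m<length ds. f (Suc m) (snd x ! m)))"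
    by (simp only: prod.lessThan_Suc_shift nth_Cons_0 nth_Cons_Suc)
  also have "\<dots> = (\<Sum>j<d. \<Sum>js\<in>idx_set ds. f 0 j * (\<Prod>m<length ds. f (Suc m) (js ! m)))"
    by (subst sum.cartesian_product) (simp add: case_prod_unfold)
  also have "\<dots> = (\<Sum>j<d. f 0 j) * (\<Prod>m<length ds. \<Sum>j<ds ! m. f (Suc m) j)"
    by (simp add: sum_distrib_left[symmetric] sum_distrib_right Cons.IH[of "\<lambda>m. f (Suc m)"])
  also have "\<dots> = (\<Prod>m<length (d # ds). \<Sum>j<(d # ds) ! m. f m j)"
    by (simp only: length_Cons prod.lessThan_Suc_shift nth_Cons_0 nth_Cons_Suc)
  finally show ?case .
qed


section \<open>Multilinear transform\<close>

definition F :: "nat list \<Rightarrow> (nat list \<Rightarrow> complex) \<Rightarrow> (nat \<Rightarrow> nat \<Rightarrow> nat \<Rightarrow> complex) \<Rightarrow> nat list \<Rightarrow> complex" where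
  "F dims T M xs = (\<Sum>js\<in>idx_set dims. T js * (\<Prod>m<length dims. M m (xs ! m) (js ! m)))"

lemma prod_idm:
  assumes "xs \<in> idx_set dims" "js \<in> idx_set dims"
  shows "(\<Prod>m<length dims. idm (xs ! m) (js ! m)) = (if js = xs then 1 else 0)"
proof (cases "js = xs")
  case True thus ?thesis by (simp add: idm_def)
next
  case False
  have "length js = length xs" using assms by (simp add: idx_set_length)
  then obtain m where m: "m < length dims" "xs ! m \<noteq> js ! m"
    using False assms(1) by (metis idx_set_length nth_equalityI)
  hence "(\<Prod>m<length dims. idm (xs ! m) (js ! m)) = 0"
    by (intro prod_zero) (auto simp: idm_def intro!: bexI[of _ m])
  thus ?thesis using False by simp
qed

lemma F_id: "xs \<in> idx_set dims \<Longrightarrow> F dims T (\<lambda>m. idm) xs = T xs"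
  unfolding F_def
  by (simp add: prod_idm finite_idx_set cong: sum.cong)

lemma F_cong:
  assumes "\<And>n i j. n < length dims \<Longrightarrow> i < dims ! n \<Longrightarrow> j < dims ! n \<Longrightarrow> M n i j = M' n i j"
    and "xs \<in> idx_set dims"
  shows "F dims T M xs = F dims T M' xs"
  unfolding F_def
  by (intro sum.cong refl arg_cong2[where f="(*)"] prod.cong)
     (auto intro!: assms(1) idx_set_nth assms(2))

lemma F_comp:
  assumes "xs \<in> idx_set dims"
  shows "F dims (F dims T M) M' xs = F dims T (\<lambda>n i j. \<Sum>l<dims ! n. M' n i l * M n l j) xs"
proof -
  have "F dims (F dims T M) M' xs
     = (\<Sum>js\<in>idx_set dims. \<Sum>ks\<in>idx_set dims. T ks * ((\<Prod>m<length dims. M m (js ! m) (ks ! m)) * (\<Prod>m<length dims. M' m (xs ! m) (js ! m))))"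
    unfolding F_def sum_distrib_right by (simp add: mult_ac)
  also have "\<dots> = (\<Sum>ks\<in>idx_set dims. T ks * (\<Sum>js\<in>idx_set dims. \<Prod>m<length dims. M' m (xs ! m) (js ! m) * M m (js ! m) (ks ! m)))"
    by (subst sum.swap) (simp add: sum_distrib_left prod.distrib mult_ac)
  also have "\<dots> = F dims T (\<lambda>n i j. \<Sum>l<dims ! n. M' n i l * M n l j) xs"
    unfolding F_def
  proof (intro sum.cong refl arg_cong2[where f="(*)"])
    fix ks
    show "(\<Sum>js\<in>idx_set dims. \<Prod>m<length dims. M' m (xs ! m) (js ! m) * M m (js ! m) (ks ! m))
        = (\<Prod>m<length dims. \<Sum>l<dims ! m. M' m (xs ! m) l * M m l (ks ! m))"
      by (rule sum_prod_idx[where f="\<lambda>m j. M' m (xs ! m) j * M m j (ks ! m)"])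
  qed
  finally show ?thesis .
qed

definition cmode :: "nat list \<Rightarrow> (nat list \<Rightarrow> complex) \<Rightarrow> nat \<Rightarrow> (nat \<Rightarrow> nat \<Rightarrow> complex) \<Rightarrow> nat list \<Rightarrow> complex" where
  "cmode dims T n U = (\<lambda>xs. \<Sum>i<dims ! n. T (xs[n := i]) * U (xs ! n) i)"

definition cfold :: "nat list \<Rightarrow> (nat list \<Rightarrow> complex) \<Rightarrow> (nat \<Rightarrow> nat \<Rightarrow> nat \<Rightarrow> complex) \<Rightarrow> nat \<Rightarrow> nat list \<Rightarrow> complex" where
  "cfold dims T Us k = foldl (\<lambda>T n. cmode dims T n (Us n)) T [0..<k]"

lemma cfold_F:
  assumes "k \<le> length dims" "xs \<in> idx_set dims"
  shows "cfold dims T Us k xs = F dims T (\<lambda>m. if m < k then Us m else idm) xs"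
  using assms
proof (induction k arbitrary: xs)
  case 0
  thus ?case by (simp add: cfold_def F_id)
next
  case (Suc k)
  let ?M = "\<lambda>m. if m < k then Us m else idm"
  let ?M' = "\<lambda>m. if m < Suc k then Us m else idm"
  have k: "k < length dims" using Suc.prems by simp
  have lx: "length xs = length dims" using Suc.prems idx_set_length by blast
  have "cfold dims T Us (Suc k) xs = (\<Sum>i<dims ! k. cfold dims T Us k (xs[k := i]) * Us k (xs ! k) i)"
    unfolding cfold_def cmode_def by simp
  also have "\<dots> = (\<Sum>i<dims ! k. F dims T ?M (xs[k := i]) * Us k (xs ! k) i)"
    using Suc.IH[of "xs[k := _]"] Suc.prems idx_set_upd by (intro sum.cong refl) auto
  also have "\<dots> = F dims T ?M' xs"
  proof -
    have pr: "(\<Prod>m<length dims. ?M m ((xs[k := i]) ! m) (js ! m))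
        = idm i (js ! k) * (\<Prod>m\<in>{..<length dims} - {k}. ?M m (xs ! m) (js ! m))" for i js
      using k lx by (subst prod.remove[of _ k]) (auto intro!: prod.cong simp: nth_list_update)
    have pr': "(\<Prod>m<length dims. ?M' m (xs ! m) (js ! m))
        = Us k (xs ! k) (js ! k) * (\<Prod>m\<in>{..<length dims} - {k}. ?M m (xs ! m) (js ! m))" for js
      using k by (subst prod.remove[of _ k]) (auto intro!: prod.cong simp: less_Suc_eq)
    have "(\<Sum>i<dims ! k. F dims T ?M (xs[k := i]) * Us k (xs ! k) i)
      = (\<Sum>js\<in>idx_set dims. T js * (\<Sum>i<dims ! k. idm i (js ! k) * Us k (xs ! k) i) *
            (\<Prod>m\<in>{..<length dims} - {k}. ?M m (xs ! m) (js ! m)))"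
      unfolding F_def pr sum_distrib_right
      by (subst sum.swap) (simp add: sum_distrib_left sum_distrib_right mult_ac)
    also have "\<dots> = (\<Sum>js\<in>idx_set dims. T js * Us k (xs ! k) (js ! k) *
            (\<Prod>m\<in>{..<length dims} - {k}. ?M m (xs ! m) (js ! m)))"
    proof (intro sum.cong refl)
      fix js assume js: "js \<in> idx_set dims"
      have "js ! k < dims ! k" using idx_set_nth[OF js k] .
      hence "(\<Sum>i<dims ! k. idm i (js ! k) * Us k (xs ! k) i) = Us k (xs ! k) (js ! k)"
        unfolding idm_def by simp
      thus "T js * (\<Sum>i<dims ! k. idm i (js ! k) * Us k (xs ! k) i) *
            (\<Prod>m\<in>{..<length dims} - {k}. ?M m (xs ! m) (js ! m)) =
            T js * Us k (xs ! k) (js ! k) * (\<Prod>m\<in>{..<length dims} - {k}. ?M m (xs ! m) (js ! m))"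
        by simp
    qed
    also have "\<dots> = F dims T ?M' xs" unfolding F_def pr' by (simp add: mult_ac)
    finally show ?thesis .
  qed
  finally show ?case .
qed


section \<open>Gram matrices of unfoldings\<close>

definition gram :: "nat list \<Rightarrow> (nat list \<Rightarrow> complex) \<Rightarrow> nat \<Rightarrow> nat \<Rightarrow> nat \<Rightarrow> complex" where
  "gram dims T n a b = (\<Sum>xs\<in>{xs\<in>idx_set dims. xs ! n = a}. cnj (T xs) * T (xs[n := b]))"

lemma reidx:
  assumes js: "js \<in> idx_set dims" and n: "n < length dims"
  shows "(\<Sum>ks\<in>idx_set dims. g ks * (\<Prod>m\<in>{..<length dims} - {n}. idm (js ! m) (ks ! m)))
       = (\<Sum>k<dims ! n. g (js[n := k]))"
proof -
  let ?S = "(\<lambda>k. js[n := k]) ` {..<dims ! n}"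
  have lj: "length js = length dims" using js by (rule idx_set_length)
  have sub: "?S \<subseteq> idx_set dims" using idx_set_upd[OF js] by auto
  have "(\<Sum>ks\<in>idx_set dims. g ks * (\<Prod>m\<in>{..<length dims} - {n}. idm (js ! m) (ks ! m))) = (\<Sum>ks\<in>?S. g ks)"
  proof (rule sum.mono_neutral_cong_right[OF finite_idx_set sub])
    show "\<forall>ks\<in>idx_set dims - ?S. g ks * (\<Prod>m\<in>{..<length dims} - {n}. idm (js ! m) (ks ! m)) = 0"
    proof
      fix ks assume ks: "ks \<in> idx_set dims - ?S"
      have lk: "length ks = length dims" using ks idx_set_length by blast
      have "\<exists>m\<in>{..<length dims} - {n}. js ! m \<noteq> ks ! m"
      proof (rule ccontr)
        assume "\<not> ?thesis"
        hence eq: "js ! m = ks ! m" if "m < length dims" "m \<noteq> n" for m using that by auto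
        have "ks = js[n := ks ! n]"
        proof (rule nth_equalityI)
          show "length ks = length (js[n := ks ! n])" using lk lj by simp
          fix i assume "i < length ks"
          thus "ks ! i = js[n := ks ! n] ! i" using lk lj eq[of i] by (cases "i = n") auto
        qed
        moreover have "ks ! n < dims ! n" using ks n idx_set_nth by blast
        ultimately show False using ks by blast
      qed
      hence "(\<Prod>m\<in>{..<length dims} - {n}. idm (js ! m) (ks ! m)) = 0"
        by (intro prod_zero) (auto simp: idm_def)
      thus "g ks * (\<Prod>m\<in>{..<length dims} - {n}. idm (js ! m) (ks ! m)) = 0" by simp
    qed
  next
    fix ks assume "ks \<in> ?S"
    then obtain k where "ks = js[n := k]" by auto
    hence "(\<Prod>m\<in>{..<length dims} - {n}. idm (js ! m) (ks ! m)) = 1"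
      by (intro prod.neutral) (auto simp: idm_def nth_list_update)
    thus "g ks * (\<Prod>m\<in>{..<length dims} - {n}. idm (js ! m) (ks ! m)) = g ks" by simp
  qed
  also have "\<dots> = (\<Sum>k<dims ! n. g (js[n := k]))"
  proof (rule sum.reindex_cong[where l="\<lambda>k. js[n := k]"])
    show "inj_on (\<lambda>k. js[n := k]) {..<dims ! n}"
      using n lj by (auto simp: inj_on_def) (metis nth_list_update_eq)
  qed auto
  finally show ?thesis .
qed

lemma sum_group_idx:
  assumes n: "n < length dims"
  shows "(\<Sum>xs\<in>idx_set dims. f xs) = (\<Sum>j<dims ! n. \<Sum>xs\<in>{xs\<in>idx_set dims. xs ! n = j}. f xs)"
  by (rule sum.group[symmetric]) (auto simp: finite_idx_set idx_set_nth n)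


lemma gram_F:
  assumes n: "n < length dims" and a: "a < dims ! n" and b: "b < dims ! n"
    and U: "\<And>m j k. m < length dims \<Longrightarrow> m \<noteq> n \<Longrightarrow> j < dims ! m \<Longrightarrow> k < dims ! m \<Longrightarrow>
               (\<Sum>i<dims ! m. cnj (M m i j) * M m i k) = idm j k"
  shows "gram dims (F dims T M) n a b
       = (\<Sum>j<dims ! n. \<Sum>k<dims ! n. cnj (M n a j) * M n b k * gram dims T n j k)"
proof -
  let ?N = "length dims"
  define h where "h js ks m i = (if m = n then idm i a * cnj (M n i (js ! n)) * M n b (ks ! n)
      else cnj (M m i (js ! m)) * M m i (ks ! m))" for js ks m i
  have A: "gram dims (F dims T M) n a b = (\<Sum>xs\<in>idx_set dims. \<Sum>js\<in>idx_set dims. \<Sum>ks\<in>idx_set dims.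
      cnj (T js) * T ks * (\<Prod>m<?N. h js ks m (xs ! m)))"
  proof -
    have "gram dims (F dims T M) n a b = (\<Sum>xs\<in>idx_set dims. if xs ! n = a then cnj (F dims T M xs) * F dims T M (xs[n := b]) else 0)"
      unfolding gram_def by (rule sum.inter_filter[OF finite_idx_set])
    also have "\<dots> = (\<Sum>xs\<in>idx_set dims. \<Sum>js\<in>idx_set dims. \<Sum>ks\<in>idx_set dims.
      cnj (T js) * T ks * (\<Prod>m<?N. h js ks m (xs ! m)))"
    proof (rule sum.cong[OF refl])
      fix xs assume xs: "xs \<in> idx_set dims"
      have lx: "length xs = ?N" using xs by (rule idx_set_length)
      show "(if xs ! n = a then cnj (F dims T M xs) * F dims T M (xs[n := b]) else 0) =
        (\<Sum>js\<in>idx_set dims. \<Sum>ks\<in>idx_set dims. cnj (T js) * T ks * (\<Prod>m<?N. h js ks m (xs ! m)))"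
      proof (cases "xs ! n = a")
        case True
        have pr: "(\<Prod>m<?N. cnj (M m (xs ! m) (js ! m))) * (\<Prod>m<?N. M m (xs[n := b] ! m) (ks ! m))
            = (\<Prod>m<?N. h js ks m (xs ! m))" for js ks
          unfolding prod.distrib[symmetric] h_def
          by (intro prod.cong refl) (auto simp: True nth_list_update lx idm_def)
        have "cnj (F dims T M xs) * F dims T M (xs[n := b])
          = (\<Sum>js\<in>idx_set dims. \<Sum>ks\<in>idx_set dims. cnj (T js) * T ks *
              ((\<Prod>m<?N. cnj (M m (xs ! m) (js ! m))) * (\<Prod>m<?N. M m (xs[n := b] ! m) (ks ! m))))"
          unfolding F_def apply (simp add: sum_distrib_left sum_distrib_right mult_ac)
          by (rule sum.swap)
        thus ?thesis unfolding pr using True by simp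
      next
        case False
        have "(\<Prod>m<?N. h js ks m (xs ! m)) = 0" for js ks
          using False n by (intro prod_zero) (auto simp: h_def idm_def intro!: bexI[of _ n])
        hence "(\<Sum>js\<in>idx_set dims. \<Sum>ks\<in>idx_set dims. cnj (T js) * T ks * (\<Prod>m<?N. h js ks m (xs ! m))) = 0"
          by (simp only: mult_zero_right sum.neutral_const)
        thus ?thesis using False by simp
      qed
    qed
    finally show ?thesis .
  qed
  have C: "(\<Prod>m<?N. \<Sum>i<dims ! m. h js ks m i)
      = cnj (M n a (js ! n)) * M n b (ks ! n) * (\<Prod>m\<in>{..<?N} - {n}. idm (js ! m) (ks ! m))"
    if js: "js \<in> idx_set dims" and ks: "ks \<in> idx_set dims" for js ks
  proof -
    have "(\<Prod>m<?N. \<Sum>i<dims ! m. h js ks m i) = (\<Sum>i<dims ! n. h js ks n i) *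
        (\<Prod>m\<in>{..<?N} - {n}. \<Sum>i<dims ! m. h js ks m i)"
      using n by (subst prod.remove[of _ n]) auto
    also have "(\<Sum>i<dims ! n. h js ks n i) = cnj (M n a (js ! n)) * M n b (ks ! n)"
      unfolding h_def idm_def using a by (simp flip: sum_distrib_right)
    also have "(\<Prod>m\<in>{..<?N} - {n}. \<Sum>i<dims ! m. h js ks m i) = (\<Prod>m\<in>{..<?N} - {n}. idm (js ! m) (ks ! m))"
    proof (rule prod.cong[OF refl])
      fix m assume m: "m \<in> {..<?N} - {n}"
      thus "(\<Sum>i<dims ! m. h js ks m i) = idm (js ! m) (ks ! m)"
        unfolding h_def using U[of m "js ! m" "ks ! m"] idx_set_nth[OF js] idx_set_nth[OF ks] by auto
    qed
    finally show ?thesis .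
  qed
  have B: "gram dims (F dims T M) n a b = (\<Sum>js\<in>idx_set dims. \<Sum>ks\<in>idx_set dims.
      cnj (T js) * T ks * (\<Prod>m<?N. \<Sum>i<dims ! m. h js ks m i))"
  proof -
    have B0: "(\<Sum>xs\<in>I. \<Sum>js\<in>I. \<Sum>ks\<in>I. f xs js ks) = (\<Sum>js\<in>I. \<Sum>ks\<in>I. \<Sum>xs\<in>I. f xs js ks)"
      for f :: "nat list \<Rightarrow> nat list \<Rightarrow> nat list \<Rightarrow> complex" and I
    proof -
      have "(\<Sum>xs\<in>I. \<Sum>js\<in>I. \<Sum>ks\<in>I. f xs js ks) = (\<Sum>js\<in>I. \<Sum>xs\<in>I. \<Sum>ks\<in>I. f xs js ks)"
        by (rule sum.swap)
      also have "\<dots> = (\<Sum>js\<in>I. \<Sum>ks\<in>I. \<Sum>xs\<in>I. f xs js ks)"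
        by (rule sum.cong[OF refl], rule sum.swap)
      finally show ?thesis .
    qed
    show ?thesis
      unfolding A
    proof (subst B0, intro sum.cong refl)
      fix js ks
      show "(\<Sum>xs\<in>idx_set dims. cnj (T js) * T ks * (\<Prod>m<?N. h js ks m (xs ! m)))
          = cnj (T js) * T ks * (\<Prod>m<?N. \<Sum>i<dims ! m. h js ks m i)"
        unfolding sum_distrib_left[symmetric] sum_prod_idx[where f="h js ks"] ..
    qed
  qed
  have D: "(\<Sum>ks\<in>idx_set dims. cnj (T js) * T ks * (\<Prod>m<?N. \<Sum>i<dims ! m. h js ks m i))
      = cnj (T js) * cnj (M n a (js ! n)) * (\<Sum>k<dims ! n. T (js[n := k]) * M n b k)"
    if js: "js \<in> idx_set dims" for js
  proof -
    have lj: "length js = ?N" using js by (rule idx_set_length)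
    have "(\<Sum>ks\<in>idx_set dims. cnj (T js) * T ks * (\<Prod>m<?N. \<Sum>i<dims ! m. h js ks m i))
      = (\<Sum>ks\<in>idx_set dims. cnj (T js) * cnj (M n a (js ! n)) * ((T ks * M n b (ks ! n)) * (\<Prod>m\<in>{..<?N} - {n}. idm (js ! m) (ks ! m))))"
      by (intro sum.cong refl) (simp add: C js mult_ac)
    also have "\<dots> = cnj (T js) * cnj (M n a (js ! n)) * (\<Sum>ks\<in>idx_set dims. (T ks * M n b (ks ! n)) * (\<Prod>m\<in>{..<?N} - {n}. idm (js ! m) (ks ! m)))"
      by (simp add: sum_distrib_left)
    also have "(\<Sum>ks\<in>idx_set dims. (T ks * M n b (ks ! n)) * (\<Prod>m\<in>{..<?N} - {n}. idm (js ! m) (ks ! m)))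
       = (\<Sum>k<dims ! n. T (js[n := k]) * M n b (js[n := k] ! n))"
      by (rule reidx[OF js n, where g="\<lambda>ks. T ks * M n b (ks ! n)"])
    also have "\<dots> = (\<Sum>k<dims ! n. T (js[n := k]) * M n b k)" using lj n by simp
    finally show ?thesis .
  qed
  have "gram dims (F dims T M) n a b = (\<Sum>js\<in>idx_set dims. cnj (T js) * cnj (M n a (js ! n)) * (\<Sum>k<dims ! n. T (js[n := k]) * M n b k))"
    unfolding B by (intro sum.cong refl D) 
  also have "\<dots> = (\<Sum>j<dims ! n. \<Sum>js\<in>{xs\<in>idx_set dims. xs ! n = j}. cnj (T js) * cnj (M n a j) * (\<Sum>k<dims ! n. T (js[n := k]) * M n b k))"
    unfolding sum_group_idx[OF n] by (intro sum.cong refl) auto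
  also have "\<dots> = (\<Sum>j<dims ! n. \<Sum>k<dims ! n. cnj (M n a j) * M n b k * gram dims T n j k)"
    unfolding gram_def
    apply (intro sum.cong refl)
    apply (simp add: sum_distrib_left sum_distrib_right mult_ac)
    apply (rule sum.swap)
    done
  finally show ?thesis .
qed


lemma unit_rows: "unit n P \<Longrightarrow> i < n \<Longrightarrow> j < n \<Longrightarrow> (\<Sum>k<n. P i k * cnj (P j k)) = idm i j"
  unfolding unit_def mmul_def adj_def by auto

lemma unit_cols: "unit n P \<Longrightarrow> i < n \<Longrightarrow> j < n \<Longrightarrow> (\<Sum>k<n. cnj (P k i) * P k j) = idm i j"
  unfolding unit_def mmul_def adj_def by auto

lemma cnj_sum_eq: "(\<Sum>k\<in>A. f k) = x \<Longrightarrow> (\<Sum>k\<in>A. cnj (f k)) = cnj x"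
  by auto

lemma gram_herm:
  assumes n: "n < length dims" and j: "j < dims ! n" and k: "k < dims ! n"
  shows "gram dims T n k j = cnj (gram dims T n j k)"
proof -
  let ?B = "{xs\<in>idx_set dims. xs ! n = k}"
  let ?A = "{xs\<in>idx_set dims. xs ! n = j}"
  have len: "xs \<in> idx_set dims \<Longrightarrow> length xs = length dims" for xs by (rule idx_set_length)
  have "cnj (gram dims T n j k) = (\<Sum>xs\<in>?A. T xs * cnj (T (xs[n := k])))"
    unfolding gram_def by (simp add: mult.commute)
  also have "\<dots> = (\<Sum>ys\<in>?B. cnj (T ys) * T (ys[n := j]))"
  proof (rule sum.reindex_cong[where l="\<lambda>ys. ys[n := j]"])
    show "inj_on (\<lambda>ys. ys[n := j]) ?B"
    proof (rule inj_onI)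
      fix x y assume "x \<in> ?B" "y \<in> ?B" "x[n := j] = y[n := j]"
      thus "x = y" by (metis (mono_tags, lifting) list_update_id list_update_overwrite mem_Collect_eq)
    qed
    show "?A = (\<lambda>ys. ys[n := j]) ` ?B"
    proof (intro equalityI subsetI)
      fix xs assume xs: "xs \<in> ?A"
      hence "xs[n := k] \<in> ?B" using idx_set_upd[OF _ k] len n by auto
      moreover have "xs = (xs[n := k])[n := j]" using xs by auto
      ultimately show "xs \<in> (\<lambda>ys. ys[n := j]) ` ?B" by blast
    next
      fix xs assume "xs \<in> (\<lambda>ys. ys[n := j]) ` ?B"
      thus "xs \<in> ?A" using idx_set_upd[OF _ j] len n by auto
    qed
    fix ys assume "ys \<in> ?B"
    hence "ys[n := k] = ys" by auto
    thus "T (ys[n := j]) * cnj (T ((ys[n := j])[n := k])) = cnj (T ys) * T (ys[n := j])"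
      by (simp add: mult.commute)
  qed
  also have "\<dots> = gram dims T n k j" unfolding gram_def ..
  finally show ?thesis by simp
qed

lemma gram_diag: "gram dims T n a a = of_real (\<Sum>xs\<in>{xs\<in>idx_set dims. xs ! n = a}. (cmod (T xs))\<^sup>2)"
  unfolding gram_def of_real_sum cnj_mult_self[symmetric]
  by (intro sum.cong refl) auto


lemma hosvd_c:
  fixes A :: "nat list \<Rightarrow> complex"
  shows "\<exists>S V. (\<forall>n<length dims. unit (dims ! n) (V n))
     \<and> (\<forall>xs\<in>idx_set dims. A xs = cfold dims S V (length dims) xs)
     \<and> (\<forall>n<length dims. \<forall>a<dims ! n. \<forall>b<dims ! n. a \<noteq> b \<longrightarrow> gram dims S n a b = 0)
     \<and> (\<forall>n<length dims. \<forall>a b. a \<le> b \<longrightarrow> b < dims ! n \<longrightarrow> Re (gram dims S n b b) \<le> Re (gram dims S n a a))"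
proof -
  let ?N = "length dims"
  define G where "G n = (\<lambda>j k. gram dims A n j k)" for n
  define Q where "Q n P d \<longleftrightarrow> unit (dims ! n) P \<and> (\<forall>i<dims ! n. \<forall>j<dims ! n. mmul (dims ! n) (G n) P i j = P i j * of_real (d j))
     \<and> (\<forall>i j. i \<le> j \<longrightarrow> j < dims ! n \<longrightarrow> d j \<le> (d i :: real))" for n P d
  have "\<forall>n. \<exists>Pd. n < ?N \<longrightarrow> Q n (fst Pd) (snd Pd)"
  proof
    fix n
    show "\<exists>Pd. n < ?N \<longrightarrow> Q n (fst Pd) (snd Pd)"
    proof (cases "n < ?N")
      case True
      have h: "herm (dims ! n) (G n)" unfolding herm_def G_def
      proof (intro allI impI)
        fix i j assume "i < dims ! n" "j < dims ! n"
        thus "gram dims A n j i = cnj (gram dims A n i j)" by (rule gram_herm[OF True])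
      qed
      obtain P d where PD: "unit (dims ! n) P \<and> (\<forall>i<dims ! n. \<forall>j<dims ! n. mmul (dims ! n) (G n) P i j = P i j * of_real (d j))
     \<and> (\<forall>i j. i \<le> j \<longrightarrow> j < dims ! n \<longrightarrow> d j \<le> (d i :: real))"
        using spectral_aux[OF h] by (elim exE) (rule that)
      hence "Q n P d" unfolding Q_def .
      hence "Q n (fst (P, d)) (snd (P, d))" by simp
      thus ?thesis by (rule_tac x="(P, d)" in exI) simp
    qed simp
  qed
  then obtain f where f: "\<And>n. n < ?N \<Longrightarrow> Q n (fst (f n)) (snd (f n))" by metis
  define P where "P n = fst (f n)" for n
  define d where "d n = snd (f n)" for n
  have uP: "unit (dims ! n) (P n)" and GP: "\<And>i j. i < dims ! n \<Longrightarrow> j < dims ! n \<Longrightarrow> mmul (dims ! n) (G n) (P n) i j = P n i j * of_real (d n j)"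
    and sd: "\<And>i j. i \<le> j \<Longrightarrow> j < dims ! n \<Longrightarrow> d n j \<le> d n i" if "n < ?N" for n
    using f[OF that] unfolding Q_def P_def d_def by auto
  define M where "M n i j = P n j i" for n i j
  define V where "V n i j = cnj (P n i j)" for n i j
  define S where "S = F dims A M"
  have uV: "unit (dims ! n) (V n)" if n: "n < ?N" for n
    unfolding unit_def mmul_def adj_def V_def
    using unit_rows[OF uP[OF n]] unit_cols[OF uP[OF n]]
    by (auto intro!: cnj_sum_eq simp: mult.commute idm_def)
  have rec: "A xs = cfold dims S V ?N xs" if xs: "xs \<in> idx_set dims" for xs
  proof -
    have "cfold dims S V ?N xs = F dims S (\<lambda>m. if m < ?N then V m else idm) xs"
      by (rule cfold_F[OF le_refl xs])
    also have "\<dots> = F dims S V xs" by (rule F_cong[OF _ xs]) auto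
    also have "\<dots> = F dims A (\<lambda>n i j. \<Sum>l<dims ! n. V n i l * M n l j) xs"
      unfolding S_def by (rule F_comp[OF xs])
    also have "\<dots> = F dims A (\<lambda>m. idm) xs"
    proof (rule F_cong[OF _ xs])
      fix n i j assume "n < ?N" "i < dims ! n" "j < dims ! n"
      thus "(\<Sum>l<dims ! n. V n i l * M n l j) = idm i j"
        unfolding V_def M_def using unit_rows[OF uP] by (auto intro!: cnj_sum_eq simp: mult.commute idm_def)
    qed
    also have "\<dots> = A xs" by (rule F_id[OF xs])
    finally show ?thesis by simp
  qed
  have gS: "gram dims S n a b = (if a = b then of_real (d n b) else 0)"
    if n: "n < ?N" and a: "a < dims ! n" and b: "b < dims ! n" for n a b
  proof -
    have "gram dims S n a b = (\<Sum>j<dims ! n. \<Sum>k<dims ! n. cnj (M n a j) * M n b k * gram dims A n j k)"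
      unfolding S_def
    proof (rule gram_F[OF n a b])
      fix m j k assume m: "m < ?N" "m \<noteq> n" "j < dims ! m" "k < dims ! m"
      show "(\<Sum>i<dims ! m. cnj (M m i j) * M m i k) = idm j k"
      proof -
        have "(\<Sum>i<dims ! m. cnj (P m j i) * P m k i) = cnj (\<Sum>i<dims ! m. P m j i * cnj (P m k i))" by simp
        thus ?thesis unfolding M_def using unit_rows[OF uP[OF m(1)] m(3,4)] by simp
      qed
    qed
    also have "\<dots> = (\<Sum>j<dims ! n. cnj (P n j a) * mmul (dims ! n) (G n) (P n) j b)"
      unfolding M_def mmul_def G_def by (simp add: sum_distrib_left mult_ac)
    also have "\<dots> = (\<Sum>j<dims ! n. cnj (P n j a) * P n j b) * of_real (d n b)"
      using GP[OF n _ b] by (simp add: sum_distrib_left sum_distrib_right mult_ac)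
    also have "\<dots> = idm a b * of_real (d n b)" using unit_cols[OF uP[OF n] a b] by simp
    finally show ?thesis by (simp add: idm_def)
  qed
  show ?thesis
  proof (intro exI conjI)
    show "\<forall>n<?N. unit (dims ! n) (V n)" using uV by blast
    show "\<forall>xs\<in>idx_set dims. A xs = cfold dims S V ?N xs" using rec by blast
    show "\<forall>n<?N. \<forall>a<dims ! n. \<forall>b<dims ! n. a \<noteq> b \<longrightarrow> gram dims S n a b = 0" using gS by simp
    show "\<forall>n<?N. \<forall>a b. a \<le> b \<longrightarrow> b < dims ! n \<longrightarrow> Re (gram dims S n b b) \<le> Re (gram dims S n a a)"
      using gS sd by auto
  qed
qed


section \<open>Transform domain\<close>

lemma sum_swap3: "(\<Sum>x\<in>A. \<Sum>y\<in>B. \<Sum>z\<in>C. f x y z) = (\<Sum>y\<in>B. \<Sum>z\<in>C. \<Sum>x\<in>A. f x y z)"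
proof -
  have "(\<Sum>x\<in>A. \<Sum>y\<in>B. \<Sum>z\<in>C. f x y z) = (\<Sum>y\<in>B. \<Sum>x\<in>A. \<Sum>z\<in>C. f x y z)"
    by (rule sum.swap)
  also have "\<dots> = (\<Sum>y\<in>B. \<Sum>z\<in>C. \<Sum>x\<in>A. f x y z)"
    by (rule sum.cong[OF refl], rule sum.swap)
  finally show ?thesis .
qed

lemma Linv:
  assumes "invertible L"
  shows "L ** matrix_inv L = Finite_Cartesian_Product.mat 1" "matrix_inv L ** L = Finite_Cartesian_Product.mat 1"
proof -
  have "\<exists>A'. L ** A' = Finite_Cartesian_Product.mat 1 \<and> A' ** L = Finite_Cartesian_Product.mat 1"
    using assms unfolding invertible_def .
  from someI_ex[OF this] show "L ** matrix_inv L = Finite_Cartesian_Product.mat 1" "matrix_inv L ** L = Finite_Cartesian_Product.mat 1"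
    unfolding matrix_inv_def by auto
qed

lemma L_inv_apply: "invertible L \<Longrightarrow> L *v (matrix_inv L *v x) = x"
  by (simp add: matrix_vector_mul_assoc Linv)

lemma inv_L_apply: "invertible L \<Longrightarrow> matrix_inv L *v (L *v x) = x"
  by (simp add: matrix_vector_mul_assoc Linv)

lemma L_inj:
  assumes "invertible L" "\<And>k. (L *v a) $ k = (L *v b) $ k"
  shows "a = b"
proof -
  have "L *v a = L *v b" using assms(2) by (simp add: Finite_Cartesian_Product.vec_eq_iff)
  hence "matrix_inv L *v (L *v a) = matrix_inv L *v (L *v b)" by simp
  thus ?thesis using inv_L_apply[OF assms(1)] by simp
qed

lemma L_sum: "(L *v (\<Sum>i\<in>A. f i)) $ k = (\<Sum>i\<in>A. (L *v f i) $ k)"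
proof (cases "finite A")
  case True
  thus ?thesis
    by (induction A rule: finite_induct) (auto simp: matrix_vector_right_distrib)
qed simp

lemma L_tprod: "invertible L \<Longrightarrow> (L *v tprod L a b) $ k = (L *v a) $ k * (L *v b) $ k"
  unfolding tprod_def by (simp add: L_inv_apply)

lemma L_tconj: "invertible L \<Longrightarrow> (L *v tconj L a) $ k = cnj ((L *v a) $ k)"
  unfolding tconj_def by (simp add: L_inv_apply)

lemma L_tmat_mult: "invertible L \<Longrightarrow> (L *v tmat_mult L J A B i j) $ k = (\<Sum>l<J. (L *v A i l) $ k * (L *v B l j) $ k)"
  unfolding tmat_mult_def by (simp add: L_sum L_tprod)

lemma L_tmat_herm: "invertible L \<Longrightarrow> (L *v tmat_herm L A i j) $ k = cnj ((L *v A j i) $ k)"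
  unfolding tmat_herm_def by (simp add: L_tconj)

lemma L_tmat_id: "invertible L \<Longrightarrow> (L *v tmat_id L i j) $ k = idm i j"
  unfolding tmat_id_def idm_def by (simp add: L_inv_apply)

lemma L_foldl:
  assumes L: "invertible L"
  shows "(L *v foldl (\<lambda>T n. mode_prod L dims T n (Us n)) T ns xs) $ k
       = foldl (\<lambda>T n. cmode dims T n (\<lambda>i j. (L *v Us n i j) $ k)) (\<lambda>xs. (L *v T xs) $ k) ns xs"
proof (induction ns arbitrary: T)
  case Nil show ?case by simp
next
  case (Cons n ns)
  have e: "(\<lambda>xs. (L *v mode_prod L dims T n (Us n) xs) $ k)
        = cmode dims (\<lambda>xs. (L *v T xs) $ k) n (\<lambda>i j. (L *v Us n i j) $ k)"
    unfolding mode_prod_def cmode_def by (simp add: L_sum L_tprod[OF L])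
  show ?case using Cons.IH[of "mode_prod L dims T n (Us n)"] by (simp add: e)
qed

lemma unitary_norm:
  fixes W :: "complex^'p::finite^'p"
  assumes "cmat_unitary W"
  shows "(\<Sum>k\<in>UNIV. (cmod ((W *v v) $ k))\<^sup>2) = (\<Sum>k\<in>UNIV. (cmod (v $ k))\<^sup>2)"
proof -
  define Wh where "Wh = (\<chi> i j. cnj (W $ j $ i))"
  have WW: "Wh ** W = Finite_Cartesian_Product.mat 1" using assms unfolding cmat_unitary_def Wh_def Let_def by simp
  have col: "(\<Sum>k\<in>UNIV. cnj (W $ k $ i) * W $ k $ j) = (if i = j then 1 else 0)" for i j
  proof -
    have "(Wh ** W) $ i $ j = (\<Sum>k\<in>UNIV. cnj (W $ k $ i) * W $ k $ j)"
      unfolding Wh_def matrix_matrix_mult_def by simp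
    thus ?thesis unfolding WW by (simp add: Finite_Cartesian_Product.mat_def)
  qed
  have "complex_of_real (\<Sum>k\<in>UNIV. (cmod ((W *v v) $ k))\<^sup>2) = (\<Sum>k\<in>UNIV. cnj ((W *v v) $ k) * (W *v v) $ k)"
    unfolding of_real_sum cnj_mult_self ..
  also have "\<dots> = (\<Sum>k\<in>UNIV. \<Sum>i\<in>UNIV. \<Sum>j\<in>UNIV. cnj (v $ i) * v $ j * (cnj (W $ k $ i) * W $ k $ j))"
    unfolding matrix_vector_mult_def
    by (simp add: sum_distrib_left sum_distrib_right mult_ac)
  also have "\<dots> = (\<Sum>i\<in>UNIV. \<Sum>j\<in>UNIV. cnj (v $ i) * v $ j * (\<Sum>k\<in>UNIV. cnj (W $ k $ i) * W $ k $ j))"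
    by (subst sum_swap3) (simp add: sum_distrib_left)
  also have "\<dots> = (\<Sum>i\<in>UNIV. cnj (v $ i) * v $ i)"
    unfolding col by (simp add: if_distrib cong: if_cong)
  also have "\<dots> = complex_of_real (\<Sum>k\<in>UNIV. (cmod (v $ k))\<^sup>2)"
    unfolding of_real_sum cnj_mult_self ..
  finally show ?thesis by (simp only: of_real_eq_iff)
qed


lemma main_constr:
  fixes L :: "complex^('p::finite)^'p" and dims :: "nat list" and A :: "nat list \<Rightarrow> complex^'p"
  assumes L: "invertible L"
  shows "\<exists>S Us. (\<forall>n<length dims. tunitary L (dims!n) (Us n))
     \<and> all_orthogonal L dims S
     \<and> (\<forall>xs\<in>idx_set dims. A xs = multi_mode_prod L dims S Us xs)
     \<and> (\<forall>n<length dims. \<forall>a b. a \<le> b \<longrightarrow> b < dims ! n \<longrightarrow>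
          (\<Sum>xs\<in>{xs\<in>idx_set dims. xs ! n = b}. \<Sum>k\<in>UNIV. (cmod ((L *v S xs) $ k))\<^sup>2)
        \<le> (\<Sum>xs\<in>{xs\<in>idx_set dims. xs ! n = a}. \<Sum>k\<in>UNIV. (cmod ((L *v S xs) $ k))\<^sup>2))"
proof -
  let ?N = "length dims"
  define R where "R k S V \<longleftrightarrow> (\<forall>n<length dims. unit (dims ! n) (V n))
     \<and> (\<forall>xs\<in>idx_set dims. (L *v A xs) $ k = cfold dims S V (length dims) xs)
     \<and> (\<forall>n<length dims. \<forall>a<dims ! n. \<forall>b<dims ! n. a \<noteq> b \<longrightarrow> gram dims S n a b = 0)
     \<and> (\<forall>n<length dims. \<forall>a b. a \<le> b \<longrightarrow> b < dims ! n \<longrightarrow> Re (gram dims S n b b) \<le> Re (gram dims S n a a))"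
    for k S V
  have "\<forall>k. \<exists>SV. R k (fst SV) (snd SV)"
  proof
    fix k
    have "\<exists>S V. R k S V" unfolding R_def by (rule hosvd_c)
    then obtain S V where "R k S V" by blast
    thus "\<exists>SV. R k (fst SV) (snd SV)" by (rule_tac x="(S, V)" in exI) simp
  qed
  then obtain g where g: "\<And>k. R k (fst (g k)) (snd (g k))" by metis
  define Sk where "Sk k = fst (g k)" for k
  define Vk where "Vk k = snd (g k)" for k
  have uV: "\<And>n. n < ?N \<Longrightarrow> unit (dims ! n) (Vk k n)"
    and rec: "\<And>xs. xs \<in> idx_set dims \<Longrightarrow> (L *v A xs) $ k = cfold dims (Sk k) (Vk k) ?N xs"
    and orth: "\<And>n a b. n < ?N \<Longrightarrow> a < dims ! n \<Longrightarrow> b < dims ! n \<Longrightarrow> a \<noteq> b \<Longrightarrow> gram dims (Sk k) n a b = 0"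
    and ord: "\<And>n a b. n < ?N \<Longrightarrow> a \<le> b \<Longrightarrow> b < dims ! n \<Longrightarrow> Re (gram dims (Sk k) n b b) \<le> Re (gram dims (Sk k) n a a)"
    for k
    using g[of k] unfolding R_def Sk_def Vk_def by auto
  define S where "S xs = matrix_inv L *v (\<chi> k. Sk k xs)" for xs
  define Us where "Us n i j = matrix_inv L *v (\<chi> k. Vk k n i j)" for n i j
  have LS: "(L *v S xs) $ k = Sk k xs" for xs k unfolding S_def by (simp add: L_inv_apply[OF L])
  have LU: "(L *v Us n i j) $ k = Vk k n i j" for n i j k unfolding Us_def by (simp add: L_inv_apply[OF L])
  have LU': "(\<lambda>i j. (L *v Us n i j) $ k) = Vk k n" for n k by (simp add: LU)
  have tu: "tunitary L (dims ! n) (Us n)" if n: "n < ?N" for n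
    unfolding tunitary_def
  proof (intro allI impI conjI)
    fix i j assume ij: "i < dims ! n" "j < dims ! n"
    show "tmat_mult L (dims ! n) (Us n) (tmat_herm L (Us n)) i j = tmat_id L i j"
      by (rule L_inj[OF L])
         (simp add: L_tmat_mult[OF L] L_tmat_herm[OF L] L_tmat_id[OF L] LU unit_rows[OF uV[OF n] ij])
    show "tmat_mult L (dims ! n) (tmat_herm L (Us n)) (Us n) i j = tmat_id L i j"
      by (rule L_inj[OF L])
         (simp add: L_tmat_mult[OF L] L_tmat_herm[OF L] L_tmat_id[OF L] LU unit_cols[OF uV[OF n] ij])
  qed
  have mm: "A xs = multi_mode_prod L dims S Us xs" if xs: "xs \<in> idx_set dims" for xs
  proof (rule L_inj[OF L])
    fix k
    have "(L *v multi_mode_prod L dims S Us xs) $ k = cfold dims (Sk k) (Vk k) ?N xs"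
      unfolding multi_mode_prod_def L_foldl[OF L] LU' LS cfold_def ..
    thus "(L *v A xs) $ k = (L *v multi_mode_prod L dims S Us xs) $ k" using rec[OF xs] by simp
  qed
  have ao: "all_orthogonal L dims S"
    unfolding all_orthogonal_def
  proof (intro allI impI)
    fix n a b assume n: "n < ?N" and a: "a < dims ! n" and b: "b < dims ! n" and ab: "a \<noteq> b"
    show "(\<Sum>xs\<in>{xs\<in>idx_set dims. xs ! n = a}. tprod L (tconj L (S xs)) (S (xs[n := b]))) = 0"
    proof (rule L_inj[OF L])
      fix k
      have "(L *v (\<Sum>xs\<in>{xs\<in>idx_set dims. xs ! n = a}. tprod L (tconj L (S xs)) (S (xs[n := b])))) $ k
          = gram dims (Sk k) n a b"
        unfolding gram_def L_sum by (simp add: L_tprod[OF L] L_tconj[OF L] LS)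
      also have "\<dots> = 0" using orth[OF n a b ab] .
      finally show "(L *v (\<Sum>xs\<in>{xs\<in>idx_set dims. xs ! n = a}. tprod L (tconj L (S xs)) (S (xs[n := b])))) $ k
          = (L *v 0) $ k" by simp
    qed
  qed
  have sl: "(\<Sum>xs\<in>{xs\<in>idx_set dims. xs ! n = a}. \<Sum>k\<in>UNIV. (cmod ((L *v S xs) $ k))\<^sup>2)
      = (\<Sum>k\<in>UNIV. Re (gram dims (Sk k) n a a))" for n a
    unfolding gram_diag LS Re_complex_of_real by (rule sum.swap)
  have od: "(\<Sum>xs\<in>{xs\<in>idx_set dims. xs ! n = b}. \<Sum>k\<in>UNIV. (cmod ((L *v S xs) $ k))\<^sup>2)
        \<le> (\<Sum>xs\<in>{xs\<in>idx_set dims. xs ! n = a}. \<Sum>k\<in>UNIV. (cmod ((L *v S xs) $ k))\<^sup>2)"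
    if "n < ?N" "a \<le> b" "b < dims ! n" for n a b
    unfolding sl by (rule sum_mono) (rule ord[OF that])
  show ?thesis using tu ao mm od by blast
qed


lemma scaled_norm:
  fixes W :: "complex^'p::finite^'p"
  assumes W: "cmat_unitary W" and c: "c \<noteq> 0" and L: "L = (\<chi> i j. c * W $ i $ j)"
  shows "(\<Sum>k\<in>UNIV. (cmod (v $ k))\<^sup>2) = (\<Sum>k\<in>UNIV. (cmod ((L *v v) $ k))\<^sup>2) / (cmod c)\<^sup>2"
proof -
  have "(L *v v) $ k = c * (W *v v) $ k" for k
    unfolding L matrix_vector_mult_def by (simp add: sum_distrib_left mult_ac)
  hence "(\<Sum>k\<in>UNIV. (cmod ((L *v v) $ k))\<^sup>2) = (cmod c)\<^sup>2 * (\<Sum>k\<in>UNIV. (cmod ((W *v v) $ k))\<^sup>2)"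
    by (simp add: norm_mult power_mult_distrib sum_distrib_left)
  thus ?thesis using c unitary_norm[OF W] by simp
qed

no_notation vec_index (infixl "$" 100)

theorem theorem4p2:
  fixes L :: "complex^('p::finite)^'p" and dims :: "nat list" and A :: "nat list \<Rightarrow> complex^'p"
  assumes "invertible L"
  shows "(\<exists>S Us. (\<forall>n<length dims. tunitary L (dims!n) (Us n))
                \<and> all_orthogonal L dims S
                \<and> (\<forall>is\<in>idx_set dims. A is = multi_mode_prod L dims S Us is))
       \<and> ((\<exists>c W. c \<noteq> 0 \<and> cmat_unitary W \<and> L = (\<chi> i j. c * W$i$j)) \<longrightarrow>
          (\<exists>S Us. (\<forall>n<length dims. tunitary L (dims!n) (Us n))
                \<and> all_orthogonal L dims S
                \<and> ordered_slices dims S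
                \<and> (\<forall>is\<in>idx_set dims. A is = multi_mode_prod L dims S Us is)))"
proof -
  obtain S Us where S: "\<forall>n<length dims. tunitary L (dims!n) (Us n)" "all_orthogonal L dims S"
     "\<forall>xs\<in>idx_set dims. A xs = multi_mode_prod L dims S Us xs"
     and od: "\<forall>n<length dims. \<forall>a b. a \<le> b \<longrightarrow> b < dims ! n \<longrightarrow>
          (\<Sum>xs\<in>{xs\<in>idx_set dims. xs ! n = b}. \<Sum>k\<in>UNIV. (cmod ((L *v S xs) $ k))\<^sup>2)
        \<le> (\<Sum>xs\<in>{xs\<in>idx_set dims. xs ! n = a}. \<Sum>k\<in>UNIV. (cmod ((L *v S xs) $ k))\<^sup>2)"
    using main_constr[OF assms, of dims A] by (elim exE conjE) (rule that)
  have part2: "ordered_slices dims S" if hcw: "\<exists>c W. c \<noteq> 0 \<and> cmat_unitary W \<and> L = (\<chi> i j. c * W$i$j)"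
  proof -
    obtain c W where cW: "c \<noteq> 0" "cmat_unitary W" "L = (\<chi> i j. c * W$i$j)" using hcw by (elim exE conjE) (rule that)
    have sn: "slice_norm dims S n a = sqrt ((\<Sum>xs\<in>{xs\<in>idx_set dims. xs ! n = a}. \<Sum>k\<in>UNIV. (cmod ((L *v S xs) $ k))\<^sup>2) / (cmod c)\<^sup>2)" for n a
    proof -
      have e: "(\<Sum>xs\<in>X. \<Sum>k\<in>UNIV. (cmod (S xs $ k))\<^sup>2) = (\<Sum>xs\<in>X. (\<Sum>k\<in>UNIV. (cmod ((L *v S xs) $ k))\<^sup>2) / (cmod c)\<^sup>2)" for X
        by (rule sum.cong[OF refl], rule scaled_norm[OF cW(2,1,3)])
      show ?thesis unfolding slice_norm_def e sum_divide_distrib ..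
    qed
    show ?thesis unfolding ordered_slices_def sn
    proof (intro allI impI, elim conjE)
      fix n a b assume n: "n < length dims" and ab: "a \<le> b" "b < dims ! n"
      have "(\<Sum>xs\<in>{xs\<in>idx_set dims. xs ! n = b}. \<Sum>k\<in>UNIV. (cmod ((L *v S xs) $ k))\<^sup>2)
        \<le> (\<Sum>xs\<in>{xs\<in>idx_set dims. xs ! n = a}. \<Sum>k\<in>UNIV. (cmod ((L *v S xs) $ k))\<^sup>2)"
        using od n ab by blast
      hence "(\<Sum>xs\<in>{xs\<in>idx_set dims. xs ! n = b}. \<Sum>k\<in>UNIV. (cmod ((L *v S xs) $ k))\<^sup>2) / (cmod c)\<^sup>2
        \<le> (\<Sum>xs\<in>{xs\<in>idx_set dims. xs ! n = a}. \<Sum>k\<in>UNIV. (cmod ((L *v S xs) $ k))\<^sup>2) / (cmod c)\<^sup>2"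
        by (rule divide_right_mono) simp
      thus "sqrt ((\<Sum>xs\<in>{xs\<in>idx_set dims. xs ! n = b}. \<Sum>k\<in>UNIV. (cmod ((L *v S xs) $ k))\<^sup>2) / (cmod c)\<^sup>2)
        \<le> sqrt ((\<Sum>xs\<in>{xs\<in>idx_set dims. xs ! n = a}. \<Sum>k\<in>UNIV. (cmod ((L *v S xs) $ k))\<^sup>2) / (cmod c)\<^sup>2)"
        by (rule real_sqrt_le_mono)
    qed
  qed
  show ?thesis
  proof (intro conjI impI)
    show "\<exists>S Us. (\<forall>n<length dims. tunitary L (dims!n) (Us n)) \<and> all_orthogonal L dims S
                \<and> (\<forall>is\<in>idx_set dims. A is = multi_mode_prod L dims S Us is)"
      using S by blast
    assume h: "\<exists>c W. c \<noteq> 0 \<and> cmat_unitary W \<and> L = (\<chi> i j. c * W$i$j)"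
    show "\<exists>S Us. (\<forall>n<length dims. tunitary L (dims!n) (Us n)) \<and> all_orthogonal L dims S
                \<and> ordered_slices dims S \<and> (\<forall>is\<in>idx_set dims. A is = multi_mode_prod L dims S Us is)"
      using S part2[OF h] by blast
  qed
qed

end
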